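(* Fix constants $\gamma\in(0,1]$, $c_1>0$ and $K\ge1$. There exist constants $L_0$ and $K'$ depending only on $\gamma,c_1,K$ such that the following holds for every $L\ge L_0$. Let $d_0,\dots,d_L$ be positive integers and let $A_i(0),A_i\in\mathbb{R}^{d_i\times d_{i-1}}$ ($i\in[L]$) be matrices; write $A_{j:i}=A_j\cdots A_i$ and $A_{j:i}(0)=A_j(0)\cdots A_i(0)$ for $1\le i\le j\le L$. Suppose $\|A_{j:i}(0)\|\le KL^3$ for all $1\le i\le j\le L$, $\|A_{j:i}(0)\|\le e^{-c_1L^\gamma}$ for all $1\le i\le j\le L$ with $j-i\ge L/10$, and $\|A_i-A_i(0)\|\le e^{-0.6c_1L^\gamma}$ for all $i\in[L]$. Then $$\|A_{j:i}\|\le K'L^3\quad\forall\,1\le i\le j\le L,\qquad \|A_{j:i}\|\le K'e^{-c_1L^\gamma}\quad\forall\,1\le i\le j\le L\text{ with }j-i\ge L/4.$$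
   Context: $\|\cdot\|$ denotes the spectral norm; $[L]=\{1,\dots,L\}$. *)

theory Defs
  imports Complex_Main "Jordan_Normal_Form.Matrix"
begin

definition vec_norm2 :: "real vec \<Rightarrow> real" where
  "vec_norm2 v = sqrt (\<Sum>k<dim_vec v. (v $ k)\<^sup>2)"

definition spec_norm :: "real mat \<Rightarrow> real" where
  "spec_norm A = Sup {vec_norm2 (A *\<^sub>v v) | v. v \<in> carrier_vec (dim_col A) \<and> vec_norm2 v = 1}"

text \<open>Ordered product A_{i+k} * ... * A_i; so A_{j:i} = mat_seg A i (j - i) for i \<le> j.\<close>
primrec mat_seg :: "(nat \<Rightarrow> real mat) \<Rightarrow> nat \<Rightarrow> nat \<Rightarrow> real mat" where
  "mat_seg A i 0 = A i"
| "mat_seg A i (Suc k) = A (i + Suc k) * mat_seg A i k"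

end

theory Submission
  imports Defs "HOL-Analysis.L2_Norm" "HOL-Real_Asymp.Real_Asymp"
begin


lemma vn_L2: "vec_norm2 v = L2_set (\<lambda>k. v $ k) {..<dim_vec v}"
  unfolding vec_norm2_def L2_set_def by simp

lemma vn_nonneg: "0 \<le> vec_norm2 v" by (simp add: vn_L2)

lemma vn_smult: "vec_norm2 (c \<cdot>\<^sub>v v) = \<bar>c\<bar> * vec_norm2 v"
proof -
  have "(\<Sum>k<dim_vec v. ((c \<cdot>\<^sub>v v) $ k)\<^sup>2) = c\<^sup>2 * (\<Sum>k<dim_vec v. (v $ k)\<^sup>2)"
    by (simp add: sum_distrib_left power_mult_distrib)
  then show ?thesis unfolding vec_norm2_def by (simp add: real_sqrt_mult)
qed

lemma vn_add: assumes "v \<in> carrier_vec n" "w \<in> carrier_vec n"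
  shows "vec_norm2 (v + w) \<le> vec_norm2 v + vec_norm2 w"
proof -
  have "vec_norm2 (v + w) = L2_set (\<lambda>k. v $ k + w $ k) {..<n}"
    using assms unfolding vn_L2 by (intro L2_set_cong) auto
  also have "\<dots> \<le> L2_set (\<lambda>k. v $ k) {..<n} + L2_set (\<lambda>k. w $ k) {..<n}"
    by (rule L2_set_triangle_ineq)
  finally show ?thesis using assms by (simp add: vn_L2)
qed

lemma vn_zero_iff: "vec_norm2 v = 0 \<Longrightarrow> v = 0\<^sub>v (dim_vec v)"
  unfolding vn_L2 by (intro eq_vecI) (auto simp: L2_set_eq_0_iff)

lemma vn_unit: "i < n \<Longrightarrow> vec_norm2 (unit_vec n i) = 1"
proof -
  assume i: "i < n"
  have "(\<Sum>k<n. ((unit_vec n i :: real vec) $ k)\<^sup>2) = (\<Sum>k<n. if k = i then 1 else 0)"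
    by (intro sum.cong) (auto simp: unit_vec_def)
  also have "\<dots> = 1" using i by simp
  finally show ?thesis unfolding vec_norm2_def by simp
qed

definition normset :: "real mat \<Rightarrow> real set" where
  "normset A = {vec_norm2 (A *\<^sub>v v) | v. v \<in> carrier_vec (dim_col A) \<and> vec_norm2 v = 1}"

lemma spec_norm_alt: "spec_norm A = Sup (normset A)"
  unfolding spec_norm_def normset_def by simp

lemma normset_bdd: "bdd_above (normset A)"
proof -
  let ?B = "\<Sum>i<dim_row A. \<Sum>k<dim_col A. \<bar>A $$ (i,k)\<bar>"
  have "x \<le> ?B" if xin: "x \<in> normset A" for x
  proof -
    obtain v where v: "v \<in> carrier_vec (dim_col A)" "vec_norm2 v = 1" and x: "x = vec_norm2 (A *\<^sub>v v)"
      using xin unfolding normset_def by blast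
    have vk: "\<bar>v $ k\<bar> \<le> 1" if "k < dim_col A" for k
    proof -
      have "\<bar>v $ k\<bar> \<le> L2_set (\<lambda>k. \<bar>v $ k\<bar>) {..<dim_vec v}"
        using that v by (intro member_le_L2_set) auto
      also have "\<dots> = 1" using v(2) unfolding vn_L2 L2_set_def by simp
      finally show ?thesis .
    qed
    have "x \<le> (\<Sum>i<dim_row A. \<bar>(A *\<^sub>v v) $ i\<bar>)"
      unfolding x vn_L2 using L2_set_le_sum_abs[of "\<lambda>i. (A *\<^sub>v v) $ i" "{..<dim_row A}"] by simp
    also have "\<dots> \<le> ?B"
    proof (intro sum_mono)
      fix i assume i: "i \<in> {..<dim_row A}"
      have "\<bar>(A *\<^sub>v v) $ i\<bar> = \<bar>\<Sum>k<dim_col A. A $$ (i,k) * v $ k\<bar>"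
        using i v by (simp add: scalar_prod_def atLeast0LessThan)
      also have "\<dots> \<le> (\<Sum>k<dim_col A. \<bar>A $$ (i,k)\<bar> * \<bar>v $ k\<bar>)"
        by (rule order_trans[OF sum_abs]) (simp add: abs_mult)
      also have "\<dots> \<le> (\<Sum>k<dim_col A. \<bar>A $$ (i,k)\<bar>)"
        by (intro sum_mono) (simp add: mult_left_le vk)
      finally show "\<bar>(A *\<^sub>v v) $ i\<bar> \<le> (\<Sum>k<dim_col A. \<bar>A $$ (i,k)\<bar>)" .
    qed
    finally show ?thesis .
  qed
  then show ?thesis by (auto simp: bdd_above_def)
qed

lemma normset_ne: "0 < dim_col A \<Longrightarrow> normset A \<noteq> {}"
  unfolding normset_def using vn_unit[of 0 "dim_col A"] by (auto intro!: exI[of _ "unit_vec (dim_col A) 0"])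

lemma spec_norm_upper: "v \<in> carrier_vec (dim_col A) \<Longrightarrow> vec_norm2 v = 1 \<Longrightarrow> vec_norm2 (A *\<^sub>v v) \<le> spec_norm A"
  unfolding spec_norm_alt by (rule cSup_upper[OF _ normset_bdd]) (auto simp: normset_def)

lemma spec_norm_nonneg: "0 < dim_col A \<Longrightarrow> 0 \<le> spec_norm A"
  using spec_norm_upper[of "unit_vec (dim_col A) 0" A] vn_unit[of 0 "dim_col A"] vn_nonneg
  by (metis order_trans unit_vec_carrier)

lemma spec_norm_apply:
  assumes A: "A \<in> carrier_mat n m" and m: "0 < m" and v: "v \<in> carrier_vec m"
  shows "vec_norm2 (A *\<^sub>v v) \<le> spec_norm A * vec_norm2 v"
proof (cases "vec_norm2 v = 0")
  case True
  then have "v = 0\<^sub>v m" using vn_zero_iff v by fastforce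
  then have "A *\<^sub>v v = 0\<^sub>v n" using A by (intro eq_vecI) (auto simp: scalar_prod_def)
  then have "vec_norm2 (A *\<^sub>v v) = 0" by (simp add: vec_norm2_def)
  then show ?thesis using True by simp
next
  case False
  then have pos: "0 < vec_norm2 v" using vn_nonneg[of v] by simp
  let ?u = "(1 / vec_norm2 v) \<cdot>\<^sub>v v"
  have "vec_norm2 ?u = 1" using pos by (simp add: vn_smult)
  then have "vec_norm2 (A *\<^sub>v ?u) \<le> spec_norm A" using A v by (intro spec_norm_upper) auto
  moreover have "A *\<^sub>v ?u = (1 / vec_norm2 v) \<cdot>\<^sub>v (A *\<^sub>v v)" using A v by (rule mult_mat_vec)
  ultimately have "vec_norm2 (A *\<^sub>v v) / vec_norm2 v \<le> spec_norm A" using pos by (simp add: vn_smult)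
  then show ?thesis using pos by (simp add: divide_le_eq)
qed

lemma spec_norm_least:
  assumes A: "A \<in> carrier_mat n m" and m: "0 < m"
    and h: "\<And>v. v \<in> carrier_vec m \<Longrightarrow> vec_norm2 (A *\<^sub>v v) \<le> C * vec_norm2 v"
  shows "spec_norm A \<le> C"
  unfolding spec_norm_alt
proof (rule cSup_least)
  show "normset A \<noteq> {}" using A m by (intro normset_ne) auto
  fix x assume "x \<in> normset A"
  then show "x \<le> C" using h A unfolding normset_def by fastforce
qed

lemma spec_norm_mult:
  assumes A: "A \<in> carrier_mat n m" and B: "B \<in> carrier_mat m p" and m: "0 < m" and p: "0 < p"
  shows "spec_norm (A * B) \<le> spec_norm A * spec_norm B"
proof (rule spec_norm_least[of _ n p])
  show "A * B \<in> carrier_mat n p" using A B by simp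
  show "0 < p" by fact
  fix v :: "real vec" assume v: "v \<in> carrier_vec p"
  have "vec_norm2 ((A * B) *\<^sub>v v) = vec_norm2 (A *\<^sub>v (B *\<^sub>v v))" using A B v by simp
  also have "\<dots> \<le> spec_norm A * vec_norm2 (B *\<^sub>v v)" using A B v m by (intro spec_norm_apply) auto
  also have "\<dots> \<le> spec_norm A * (spec_norm B * vec_norm2 v)"
    using spec_norm_nonneg[of A] A m spec_norm_apply[OF B p v] by (intro mult_left_mono) auto
  finally show "vec_norm2 ((A * B) *\<^sub>v v) \<le> spec_norm A * spec_norm B * vec_norm2 v" by simp
qed

lemma spec_norm_add:
  assumes A: "A \<in> carrier_mat n m" and B: "B \<in> carrier_mat n m" and m: "0 < m"
  shows "spec_norm (A + B) \<le> spec_norm A + spec_norm B"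
proof (rule spec_norm_least[of _ n m])
  show "A + B \<in> carrier_mat n m" using A B by simp
  show "0 < m" by fact
  fix v :: "real vec" assume v: "v \<in> carrier_vec m"
  have "vec_norm2 ((A + B) *\<^sub>v v) = vec_norm2 (A *\<^sub>v v + B *\<^sub>v v)" using A B v
    by (simp add: add_mult_distrib_mat_vec)
  also have "\<dots> \<le> vec_norm2 (A *\<^sub>v v) + vec_norm2 (B *\<^sub>v v)" using A B v by (intro vn_add[of _ n]) auto
  also have "\<dots> \<le> spec_norm A * vec_norm2 v + spec_norm B * vec_norm2 v"
    using spec_norm_apply[OF A m v] spec_norm_apply[OF B m v] by simp
  finally show "vec_norm2 ((A + B) *\<^sub>v v) \<le> (spec_norm A + spec_norm B) * vec_norm2 v"
    by (simp add: algebra_simps)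
qed

lemma spec_norm_one: "0 < n \<Longrightarrow> spec_norm (1\<^sub>m n) \<le> 1"
  by (rule spec_norm_least[of _ n n]) auto



primrec segp :: "(nat \<Rightarrow> nat) \<Rightarrow> (nat \<Rightarrow> real mat) \<Rightarrow> nat \<Rightarrow> nat \<Rightarrow> real mat" where
  "segp d X i 0 = 1\<^sub>m (d (i - 1))"
| "segp d X i (Suc n) = X (i + n) * segp d X i n"

lemma segp_carrier:
  assumes carr: "\<forall>i\<in>{1..L}. X i \<in> carrier_mat (d i) (d (i - 1))"
    and i: "1 \<le> i" and n: "i + n \<le> L + 1"
  shows "segp d X i n \<in> carrier_mat (d (i + n - 1)) (d (i - 1))"
  using n
proof (induction n)
  case 0 then show ?case by simp
next
  case (Suc n)
  have "X (i + n) \<in> carrier_mat (d (i + n)) (d (i + n - 1))" using carr Suc.prems i by auto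
  then show ?case using Suc by auto
qed

lemma mat_seg_segp:
  assumes carr: "\<forall>i\<in>{1..L}. X i \<in> carrier_mat (d i) (d (i - 1))"
    and i: "1 \<le> i" and k: "i + k \<le> L"
  shows "mat_seg X i k = segp d X i (Suc k)"
  using k
proof (induction k)
  case 0
  have "X i \<in> carrier_mat (d i) (d (i - 1))" using carr i 0 by auto
  then show ?case by simp
next
  case (Suc k)
  then show ?case by simp
qed

lemma segp_split:
  assumes carr: "\<forall>i\<in>{1..L}. X i \<in> carrier_mat (d i) (d (i - 1))"
    and i: "1 \<le> i" and n: "i + n \<le> L"
  shows "segp d X i (Suc n) = segp d X (i + 1) n * X i"
  using n
proof (induction n)
  case 0
  have "X i \<in> carrier_mat (d i) (d (i - 1))" using carr i 0 by auto
  then show ?case by simp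
next
  case (Suc n)
  have c1: "X (i + Suc n) \<in> carrier_mat (d (i + Suc n)) (d (i + n))" using bspec[OF carr, of "i + Suc n"] Suc.prems i by simp
  have c2: "segp d X (i + 1) n \<in> carrier_mat (d (i + n)) (d i)"
    using segp_carrier[OF carr, of "i+1" n] Suc.prems by simp
  have c3: "X i \<in> carrier_mat (d i) (d (i - 1))" using carr i Suc.prems by auto
  have "segp d X i (Suc (Suc n)) = X (i + Suc n) * (segp d X (i + 1) n * X i)"
    using Suc by simp
  also have "\<dots> = (X (i + Suc n) * segp d X (i + 1) n) * X i"
    using c1 c2 c3 by simp
  also have "\<dots> = segp d X (i + 1) (Suc n) * X i" by simp
  finally show ?case .
qed

lemma spec_norm_self_minus:
  assumes "A \<in> carrier_mat r c" "0 < c"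
  shows "spec_norm (A - A) \<le> 0"
proof (rule spec_norm_least[of _ r c])
  show "A - A \<in> carrier_mat r c" using assms by simp
  fix v :: "real vec" assume v: "v \<in> carrier_vec c"
  have "(A - A) *\<^sub>v v = 0\<^sub>v r" using assms v by (intro eq_vecI) (auto simp: scalar_prod_def)
  then show "vec_norm2 ((A - A) *\<^sub>v v) \<le> 0 * vec_norm2 v" by (simp add: vec_norm2_def)
qed (use assms in auto)

lemma tele_gen:
  assumes H: "\<And>k. k \<le> m \<Longrightarrow> H k \<in> carrier_mat r c" and c: "0 < c"
  shows "spec_norm (H 0 - H m) \<le> (\<Sum>k<m. spec_norm (H k - H (Suc k)))"
  using H
proof (induction m)
  case 0
  then show ?case using spec_norm_self_minus[of "H 0" r c] c by simp
next
  case (Suc m)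
  have h0: "H 0 \<in> carrier_mat r c" and hm: "H m \<in> carrier_mat r c" and hs: "H (Suc m) \<in> carrier_mat r c"
    using Suc.prems by auto
  have "H 0 - H (Suc m) = (H 0 - H m) + (H m - H (Suc m))"
    using h0 hm hs by (intro eq_matI) auto
  then have "spec_norm (H 0 - H (Suc m)) \<le> spec_norm (H 0 - H m) + spec_norm (H m - H (Suc m))"
    using h0 hm hs c spec_norm_add[of "H 0 - H m" r c "H m - H (Suc m)"] by (metis minus_carrier_mat)
  also have "\<dots> \<le> (\<Sum>k<m. spec_norm (H k - H (Suc k))) + spec_norm (H m - H (Suc m))"
    using Suc by simp
  finally show ?case by simp
qed

lemma tele:
  assumes dpos: "\<forall>i\<le>L. 0 < d i"
    and cA0: "\<forall>i\<in>{1..L}. A0 i \<in> carrier_mat (d i) (d (i - 1))"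
    and cA: "\<forall>i\<in>{1..L}. A i \<in> carrier_mat (d i) (d (i - 1))"
    and eps: "\<forall>i\<in>{1..L}. spec_norm (A i - A0 i) \<le> \<epsilon>"
    and i: "1 \<le> i" and n: "i + n \<le> L + 1"
  shows "spec_norm (segp d A i n) \<le> spec_norm (segp d A0 i n) +
     (\<Sum>k<n. spec_norm (segp d A (i + k + 1) (n - k - 1)) * \<epsilon> * spec_norm (segp d A0 i k))"
proof -
  define H where "H k = segp d A (i + k) (n - k) * segp d A0 i k" for k
  have cH: "H k \<in> carrier_mat (d (i + n - 1)) (d (i - 1))" if "k \<le> n" for k
  proof -
    have "segp d A (i + k) (n - k) \<in> carrier_mat (d (i + k + (n - k) - 1)) (d (i + k - 1))"
      using segp_carrier[OF cA, of "i+k" "n-k"] i n that by simp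
    moreover have "segp d A0 i k \<in> carrier_mat (d (i + k - 1)) (d (i - 1))"
      using segp_carrier[OF cA0, of i k] i n that by simp
    ultimately show ?thesis unfolding H_def using that by auto
  qed
  have c: "0 < d (i - 1)" using dpos i n by auto
  have H0: "H 0 = segp d A i n"
    unfolding H_def using segp_carrier[OF cA, of i n] i n by simp
  have Hn: "H n = segp d A0 i n"
    unfolding H_def using segp_carrier[OF cA0, of i n] i n by simp
  have diff: "spec_norm (H k - H (Suc k)) \<le>
      spec_norm (segp d A (i + k + 1) (n - k - 1)) * \<epsilon> * spec_norm (segp d A0 i k)" if k: "k < n" for k
  proof -
    let ?Q = "segp d A (i + k + 1) (n - k - 1)"
    let ?R = "segp d A0 i k"
    let ?a = "A (i + k)"
    let ?b = "A0 (i + k)"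
    have cQ: "?Q \<in> carrier_mat (d (i + n - 1)) (d (i + k))"
      using segp_carrier[OF cA, of "i+k+1" "n-k-1"] i n k by simp
    have cR: "?R \<in> carrier_mat (d (i + k - 1)) (d (i - 1))"
      using segp_carrier[OF cA0, of i k] i n k by simp
    have ca: "?a \<in> carrier_mat (d (i + k)) (d (i + k - 1))" using cA i n k by auto
    have ca0: "?b \<in> carrier_mat (d (i + k)) (d (i + k - 1))" using cA0 i n k by auto
    have "segp d A (i + k) (n - k) = segp d A (i + k) (Suc (n - k - 1))"
      using k by (simp add: Suc_diff_Suc)
    also have "\<dots> = ?Q * ?a"
      using segp_split[OF cA, of "i+k" "n-k-1"] i n k by simp
    finally have Hk: "H k = ?Q * ?a * ?R" unfolding H_def by simp
    have "segp d A (i + Suc k) (n - Suc k) = ?Q" by simp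
    then have Hs: "H (Suc k) = ?Q * (?b * ?R)" unfolding H_def by simp
    have "H k - H (Suc k) = ?Q * (?a - ?b) * ?R"
    proof -
      have "?Q * (?a - ?b) * ?R = (?Q * ?a - ?Q * ?b) * ?R"
        using cQ ca ca0 by (simp add: mult_minus_distrib_mat)
      also have "\<dots> = ?Q * ?a * ?R - ?Q * ?b * ?R"
        using cQ ca ca0 cR by (intro minus_mult_distrib_mat) auto
      also have "?Q * ?b * ?R = ?Q * (?b * ?R)" using cQ ca0 cR by simp
      finally show ?thesis using Hk Hs by simp
    qed
    also have "spec_norm \<dots> \<le> spec_norm (?Q * (?a - ?b)) * spec_norm ?R"
      using cQ ca ca0 cR dpos i n k by (intro spec_norm_mult[of _ _ "d (i + k - 1)" _ "d (i - 1)"]) auto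
    also have "\<dots> \<le> (spec_norm ?Q * spec_norm (?a - ?b)) * spec_norm ?R"
      using cQ ca ca0 cR dpos i n k spec_norm_nonneg[of ?R]
      by (intro mult_right_mono spec_norm_mult[of _ _ "d (i + k)" _ "d (i + k - 1)"]) auto
    also have "\<dots> \<le> (spec_norm ?Q * \<epsilon>) * spec_norm ?R"
      using cQ ca ca0 cR dpos i n k spec_norm_nonneg[of ?R] spec_norm_nonneg[of ?Q] eps
      by (intro mult_right_mono mult_left_mono) auto
    finally show ?thesis .
  qed
  have "H 0 = H n + (H 0 - H n)" using cH[of 0] cH[of n] by (intro eq_matI) auto
  then have "spec_norm (H 0) \<le> spec_norm (H n) + spec_norm (H 0 - H n)"
    using cH[of 0] cH[of n] c by (metis spec_norm_add minus_carrier_mat le0 order_refl)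
  also have "spec_norm (H 0 - H n) \<le> (\<Sum>k<n. spec_norm (H k - H (Suc k)))"
    using cH c by (intro tele_gen) auto
  also have "\<dots> \<le> (\<Sum>k<n. spec_norm (segp d A (i + k + 1) (n - k - 1)) * \<epsilon> * spec_norm (segp d A0 i k))"
    using diff by (intro sum_mono) auto
  finally show ?thesis using H0 Hn by simp
qed



lemma prod3_mono:
  fixes x y a b \<epsilon> :: real
  assumes "0 \<le> x" "x \<le> a" "0 \<le> y" "y \<le> b" "0 \<le> \<epsilon>"
  shows "x * \<epsilon> * y \<le> a * \<epsilon> * b"
proof -
  have "x * \<epsilon> \<le> a * \<epsilon>" using assms by (intro mult_right_mono) auto
  moreover have "0 \<le> a * \<epsilon>" using assms by auto
  ultimately show ?thesis using assms by (intro mult_mono) auto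
qed

lemma segp_nonneg:
  assumes dpos: "\<forall>i\<le>L. 0 < d i" and carr: "\<forall>i\<in>{1..L}. X i \<in> carrier_mat (d i) (d (i - 1))"
    and i: "1 \<le> i" and n: "i + n \<le> L + 1"
  shows "0 \<le> spec_norm (segp d X i n)"
  using segp_carrier[OF carr i n] dpos i n by (intro spec_norm_nonneg) auto

lemma main_bounds:
  fixes L :: nat and M e \<epsilon> :: real
  assumes L1: "1 \<le> L"
    and dpos: "\<forall>i\<le>L. 0 < d i"
    and cA0: "\<forall>i\<in>{1..L}. A0 i \<in> carrier_mat (d i) (d (i - 1))"
    and cA: "\<forall>i\<in>{1..L}. A i \<in> carrier_mat (d i) (d (i - 1))"
    and eps: "\<forall>i\<in>{1..L}. spec_norm (A i - A0 i) \<le> \<epsilon>"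
    and epsnn: "0 \<le> \<epsilon>" and Mge: "1 \<le> M" and enn: "0 \<le> e"
    and hM: "\<forall>i n. 1 \<le> i \<longrightarrow> 1 \<le> n \<longrightarrow> i + n \<le> L + 1 \<longrightarrow> spec_norm (segp d A0 i n) \<le> M"
    and he: "\<forall>i n. 1 \<le> i \<longrightarrow> i + n \<le> L + 1 \<longrightarrow> real L / 10 \<le> real n - 1 \<longrightarrow> spec_norm (segp d A0 i n) \<le> e"
    and small: "real L * (2 * M) * \<epsilon> \<le> 1"
  shows "\<forall>i n. 1 \<le> i \<longrightarrow> i + n \<le> L + 1 \<longrightarrow> spec_norm (segp d A i n) \<le> 2 * M"
    and "\<forall>i n. 1 \<le> i \<longrightarrow> i + n \<le> L + 1 \<longrightarrow> 40 \<le> L \<longrightarrow> real L / 4 \<le> real n - 1 \<longrightarrow>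
           spec_norm (segp d A i n) \<le> 3 * e + 2 * real L ^ 2 * M ^ 3 * \<epsilon> ^ 2"
proof -
  have hM0: "spec_norm (segp d A0 i n) \<le> M" if "1 \<le> i" "i + n \<le> L + 1" for i n
  proof (cases n)
    case 0
    have "spec_norm (segp d A0 i n) \<le> 1" using 0 dpos that by (simp add: spec_norm_one)
    then show ?thesis using Mge by simp
  next
    case (Suc m)
    then have "1 \<le> n" by simp
    then show ?thesis using hM that by blast
  qed
  have nnA0: "0 \<le> spec_norm (segp d A0 i n)" if "1 \<le> i" "i + n \<le> L + 1" for i n
    using segp_nonneg[OF dpos cA0 that] .
  have nnA: "0 \<le> spec_norm (segp d A i n)" if "1 \<le> i" "i + n \<le> L + 1" for i n
    using segp_nonneg[OF dpos cA that] .
  have T: "spec_norm (segp d A i n) \<le> spec_norm (segp d A0 i n) +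
     (\<Sum>k<n. spec_norm (segp d A (i + k + 1) (n - k - 1)) * \<epsilon> * spec_norm (segp d A0 i k))"
    if "1 \<le> i" "i + n \<le> L + 1" for i n
    using tele[OF dpos cA0 cA eps that] .
  have sumL: "(\<Sum>k<n. c) \<le> real L * c" if "n \<le> L" "0 \<le> c" for n and c :: real
    using that by (simp add: mult_right_mono)
  have B1: "spec_norm (segp d A i n) \<le> 2 * M" if "1 \<le> i" "i + n \<le> L + 1" for i n
    using that
  proof (induction n arbitrary: i rule: less_induct)
    case (less n)
    have "(\<Sum>k<n. spec_norm (segp d A (i + k + 1) (n - k - 1)) * \<epsilon> * spec_norm (segp d A0 i k))
        \<le> (\<Sum>k<n. (2 * M) * \<epsilon> * M)"
    proof (intro sum_mono prod3_mono)
      fix k assume k: "k \<in> {..<n}"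
      show "0 \<le> spec_norm (segp d A (i + k + 1) (n - k - 1))" using k less.prems by (intro nnA) auto
      show "spec_norm (segp d A (i + k + 1) (n - k - 1)) \<le> 2 * M" using k less.prems by (intro less.IH) auto
      show "0 \<le> spec_norm (segp d A0 i k)" using k less.prems by (intro nnA0) auto
      show "spec_norm (segp d A0 i k) \<le> M" using k less.prems by (intro hM0) auto
    qed (rule epsnn)
    also have "\<dots> \<le> real L * ((2 * M) * \<epsilon> * M)"
      using less.prems Mge epsnn by (intro sumL) auto
    also have "\<dots> = (real L * (2 * M) * \<epsilon>) * M" by simp
    also have "\<dots> \<le> M" using mult_right_mono[OF small, of M] Mge by linarith
    finally show ?case using T[OF less.prems] hM0[OF less.prems] by simp
  qed
  then show "\<forall>i n. 1 \<le> i \<longrightarrow> i + n \<le> L + 1 \<longrightarrow> spec_norm (segp d A i n) \<le> 2 * M" by blast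
  define \<eta> where "\<eta> = e + real L * ((2 * M) * \<epsilon> * M)"
  have B2: "spec_norm (segp d A i n) \<le> \<eta>" if "1 \<le> i" "i + n \<le> L + 1" "real L / 10 \<le> real n - 1" for i n
  proof -
    have "(\<Sum>k<n. spec_norm (segp d A (i + k + 1) (n - k - 1)) * \<epsilon> * spec_norm (segp d A0 i k))
        \<le> (\<Sum>k<n. (2 * M) * \<epsilon> * M)"
    proof (intro sum_mono prod3_mono)
      fix k assume k: "k \<in> {..<n}"
      show "0 \<le> spec_norm (segp d A (i + k + 1) (n - k - 1))" using k that by (intro nnA) auto
      show "spec_norm (segp d A (i + k + 1) (n - k - 1)) \<le> 2 * M" using k that by (intro B1) auto
      show "0 \<le> spec_norm (segp d A0 i k)" using k that by (intro nnA0) auto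
      show "spec_norm (segp d A0 i k) \<le> M" using k that by (intro hM0) auto
    qed (rule epsnn)
    also have "\<dots> \<le> real L * ((2 * M) * \<epsilon> * M)"
      using that Mge epsnn by (intro sumL) auto
    finally show ?thesis using T[OF that(1,2)] he that unfolding \<eta>_def by force
  qed
  show "\<forall>i n. 1 \<le> i \<longrightarrow> i + n \<le> L + 1 \<longrightarrow> 40 \<le> L \<longrightarrow> real L / 4 \<le> real n - 1 \<longrightarrow>
           spec_norm (segp d A i n) \<le> 3 * e + 2 * real L ^ 2 * M ^ 3 * \<epsilon> ^ 2"
  proof (intro allI impI)
    fix i n assume i: "1 \<le> i" and n: "i + n \<le> L + 1" and L40: "40 \<le> L" and long: "real L / 4 \<le> real n - 1"
    have summand: "spec_norm (segp d A (i + k + 1) (n - k - 1)) * \<epsilon> * spec_norm (segp d A0 i k)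
        \<le> (2 * M) * \<epsilon> * e + \<eta> * \<epsilon> * M" if k: "k < n" for k
    proof (cases "real L / 10 \<le> real k - 1")
      case True
      have "spec_norm (segp d A (i + k + 1) (n - k - 1)) * \<epsilon> * spec_norm (segp d A0 i k) \<le> (2 * M) * \<epsilon> * e"
        using k i n True he by (intro prod3_mono nnA nnA0 B1 epsnn) auto
      moreover have "0 \<le> \<eta> * \<epsilon> * M" unfolding \<eta>_def using enn epsnn Mge by simp
      ultimately show ?thesis by linarith
    next
      case False
      have "real (n - k - 1) = real n - real k - 1" using k by (simp add: of_nat_diff)
      moreover have "real L \<ge> 40" using L40 by simp
      ultimately have "real L / 10 \<le> real (n - k - 1) - 1" using False long by linarith
      then have "spec_norm (segp d A (i + k + 1) (n - k - 1)) * \<epsilon> * spec_norm (segp d A0 i k) \<le> \<eta> * \<epsilon> * M"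
        using k i n by (intro prod3_mono nnA nnA0 B2 hM0 epsnn) auto
      moreover have "0 \<le> (2 * M) * \<epsilon> * e" using enn epsnn Mge by simp
      ultimately show ?thesis by linarith
    qed
    have "(\<Sum>k<n. spec_norm (segp d A (i + k + 1) (n - k - 1)) * \<epsilon> * spec_norm (segp d A0 i k))
        \<le> (\<Sum>k<n. (2 * M) * \<epsilon> * e + \<eta> * \<epsilon> * M)"
      using summand by (intro sum_mono) auto
    also have "\<dots> \<le> real L * ((2 * M) * \<epsilon> * e + \<eta> * \<epsilon> * M)"
      using i n Mge epsnn enn unfolding \<eta>_def by (intro sumL) auto
    also have "\<dots> = (real L * (2 * M) * \<epsilon>) * e + (real L * (2 * M) * \<epsilon>) * (e / 2)
        + 2 * real L ^ 2 * M ^ 3 * \<epsilon> ^ 2"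
      unfolding \<eta>_def by (simp add: algebra_simps power2_eq_square power3_eq_cube)
    also have "\<dots> \<le> 1 * e + 1 * (e / 2) + 2 * real L ^ 2 * M ^ 3 * \<epsilon> ^ 2"
      using small enn Mge epsnn by (intro add_mono mult_right_mono) auto
    finally have S: "(\<Sum>k<n. spec_norm (segp d A (i + k + 1) (n - k - 1)) * \<epsilon> * spec_norm (segp d A0 i k))
        \<le> 3 / 2 * e + 2 * real L ^ 2 * M ^ 3 * \<epsilon> ^ 2" by simp
    have "spec_norm (segp d A0 i n) \<le> e" using he i n long by force
    then show "spec_norm (segp d A i n) \<le> 3 * e + 2 * real L ^ 2 * M ^ 3 * \<epsilon> ^ 2"
      using T[OF i n] S enn by linarith
  qed
qed



theorem lemma5p3:
  fixes \<gamma> c\<^sub>1 K :: real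
  assumes "0 < \<gamma>" "\<gamma> \<le> 1" "0 < c\<^sub>1" "1 \<le> K"
  shows "\<exists>L\<^sub>0 K' :: real. \<forall>L :: nat. real L \<ge> L\<^sub>0 \<longrightarrow>
    (\<forall>(d :: nat \<Rightarrow> nat) (A0 :: nat \<Rightarrow> real mat) (A :: nat \<Rightarrow> real mat).
      (\<forall>i \<le> L. 0 < d i) \<longrightarrow>
      (\<forall>i \<in> {1..L}. A0 i \<in> carrier_mat (d i) (d (i - 1)) \<and> A i \<in> carrier_mat (d i) (d (i - 1))) \<longrightarrow>
      (\<forall>i j. 1 \<le> i \<longrightarrow> i \<le> j \<longrightarrow> j \<le> L \<longrightarrow> spec_norm (mat_seg A0 i (j - i)) \<le> K * real L ^ 3) \<longrightarrow>
      (\<forall>i j. 1 \<le> i \<longrightarrow> i \<le> j \<longrightarrow> j \<le> L \<longrightarrow> real (j - i) \<ge> real L / 10 \<longrightarrow>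
          spec_norm (mat_seg A0 i (j - i)) \<le> exp (- c\<^sub>1 * real L powr \<gamma>)) \<longrightarrow>
      (\<forall>i \<in> {1..L}. spec_norm (A i - A0 i) \<le> exp (- 0.6 * c\<^sub>1 * real L powr \<gamma>)) \<longrightarrow>
      (\<forall>i j. 1 \<le> i \<longrightarrow> i \<le> j \<longrightarrow> j \<le> L \<longrightarrow> spec_norm (mat_seg A i (j - i)) \<le> K' * real L ^ 3) \<and>
      (\<forall>i j. 1 \<le> i \<longrightarrow> i \<le> j \<longrightarrow> j \<le> L \<longrightarrow> real (j - i) \<ge> real L / 4 \<longrightarrow>
          spec_norm (mat_seg A i (j - i)) \<le> K' * exp (- c\<^sub>1 * real L powr \<gamma>)))"
proof -
  have ev: "eventually (\<lambda>x::real. 2*K^3*x^11 \<le> exp(0.2*c\<^sub>1*x powr \<gamma>)) at_top"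
    using assms by real_asymp
  then obtain N where N: "\<And>x. x \<ge> N \<Longrightarrow> 2*K^3*x^11 \<le> exp(0.2*c\<^sub>1*x powr \<gamma>)"
    by (auto simp: eventually_at_top_linorder)
  show ?thesis
  proof (rule exI[of _ "max N 40"], rule exI[of _ "max (2 * K) 4"], intro allI impI)
    fix L :: nat and d :: "nat \<Rightarrow> nat" and A0 A :: "nat \<Rightarrow> real mat"
    assume LN: "max N 40 \<le> real L"
      and dpos: "\<forall>i \<le> L. 0 < d i"
      and carr: "\<forall>i \<in> {1..L}. A0 i \<in> carrier_mat (d i) (d (i - 1)) \<and> A i \<in> carrier_mat (d i) (d (i - 1))"
      and h1: "\<forall>i j. 1 \<le> i \<longrightarrow> i \<le> j \<longrightarrow> j \<le> L \<longrightarrow> spec_norm (mat_seg A0 i (j - i)) \<le> K * real L ^ 3"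
      and h2: "\<forall>i j. 1 \<le> i \<longrightarrow> i \<le> j \<longrightarrow> j \<le> L \<longrightarrow> real (j - i) \<ge> real L / 10 \<longrightarrow>
          spec_norm (mat_seg A0 i (j - i)) \<le> exp (- c\<^sub>1 * real L powr \<gamma>)"
      and h3: "\<forall>i \<in> {1..L}. spec_norm (A i - A0 i) \<le> exp (- 0.6 * c\<^sub>1 * real L powr \<gamma>)"
    define t where "t = real L powr \<gamma>"
    define M where "M = K * real L ^ 3"
    define e where "e = exp (- c\<^sub>1 * real L powr \<gamma>)"
    define \<epsilon> where "\<epsilon> = exp (- 0.6 * c\<^sub>1 * real L powr \<gamma>)"
    have L40: "40 \<le> L" using LN by simp
    have Lr: "1 \<le> real L" using L40 by simp
    have cA0: "\<forall>i\<in>{1..L}. A0 i \<in> carrier_mat (d i) (d (i - 1))" using carr by blast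
    have cA: "\<forall>i\<in>{1..L}. A i \<in> carrier_mat (d i) (d (i - 1))" using carr by blast
    have asy: "2*K^3*real L^11 \<le> exp(0.2*c\<^sub>1*t)" using N[of "real L"] LN unfolding t_def by simp
    have Mge: "1 \<le> M" unfolding M_def using assms(4) Lr
      by (metis mult_mono' one_le_power mult_1 zero_le_one)
    have t0: "0 \<le> t" unfolding t_def by simp
    have e_eq: "e = exp (- c\<^sub>1 * t)" unfolding e_def t_def by simp
    have eps_eq: "\<epsilon> = exp (- 0.6 * c\<^sub>1 * t)" unfolding \<epsilon>_def t_def by simp
    have KL: "2 * K * real L ^ 4 \<le> 2*K^3*real L^11"
    proof -
      have "K \<le> K^3" using assms(4) power_increasing[of 1 3 K] by simp
      moreover have "real L ^ 4 \<le> real L ^ 11" using Lr by (intro power_increasing) auto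
      ultimately show ?thesis using assms(4) Lr by (intro mult_mono) auto
    qed
    have small: "real L * (2 * M) * \<epsilon> \<le> 1"
    proof -
      have "exp(0.2*c\<^sub>1*t) \<le> exp (0.6 * c\<^sub>1 * t)" using assms(3) t0 by (simp add: mult_right_mono)
      moreover have "real L * (2 * M) = 2 * K * real L ^ 4" unfolding M_def
        by (simp add: eval_nat_numeral algebra_simps)
      ultimately have "real L * (2 * M) \<le> exp (0.6 * c\<^sub>1 * t)" using KL asy by linarith
      then have "real L * (2 * M) * \<epsilon> \<le> exp (0.6 * c\<^sub>1 * t) * exp (- 0.6 * c\<^sub>1 * t)"
        unfolding eps_eq by (intro mult_right_mono) auto
      also have "\<dots> = 1" by (simp add: exp_add[symmetric])
      finally show ?thesis .
    qed
    have tail: "2 * real L ^ 2 * M ^ 3 * \<epsilon> ^ 2 \<le> e"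
    proof -
      have "2 * real L ^ 2 * M ^ 3 = 2*K^3*real L^11" unfolding M_def by (simp add: power_mult_distrib algebra_simps flip: power_mult power_add)
      then have "2 * real L ^ 2 * M ^ 3 * \<epsilon> ^ 2 \<le> exp(0.2*c\<^sub>1*t) * \<epsilon> ^ 2"
        using asy by (intro mult_right_mono) auto
      also have "\<dots> = e" unfolding e_eq eps_eq by (simp add: exp_add[symmetric] flip: exp_of_nat_mult)
      finally show ?thesis .
    qed
    have hM: "\<forall>i n. 1 \<le> i \<longrightarrow> 1 \<le> n \<longrightarrow> i + n \<le> L + 1 \<longrightarrow> spec_norm (segp d A0 i n) \<le> M"
    proof (intro allI impI)
      fix i n assume i: "1 \<le> i" and n1: "1 \<le> n" and n: "i + n \<le> L + 1"
      have "mat_seg A0 i (i + n - 1 - i) = segp d A0 i (Suc (i + n - 1 - i))"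
        using i n n1 by (intro mat_seg_segp[OF cA0]) auto
      moreover have "Suc (i + n - 1 - i) = n" using n1 by simp
      ultimately show "spec_norm (segp d A0 i n) \<le> M" using h1[rule_format, of i "i + n - 1"] i n n1
        unfolding M_def by auto
    qed
    have he: "\<forall>i n. 1 \<le> i \<longrightarrow> i + n \<le> L + 1 \<longrightarrow> real L / 10 \<le> real n - 1 \<longrightarrow> spec_norm (segp d A0 i n) \<le> e"
    proof (intro allI impI)
      fix i n assume i: "1 \<le> i" and n: "i + n \<le> L + 1" and lg: "real L / 10 \<le> real n - 1"
      have n1: "1 \<le> n" using lg Lr by (cases n) auto
      have "mat_seg A0 i (i + n - 1 - i) = segp d A0 i (Suc (i + n - 1 - i))"
        using i n n1 by (intro mat_seg_segp[OF cA0]) auto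
      moreover have "Suc (i + n - 1 - i) = n" using n1 by simp
      moreover have "real (i + n - 1 - i) = real n - 1" using n1 by (simp add: of_nat_diff)
      ultimately show "spec_norm (segp d A0 i n) \<le> e" using h2[rule_format, of i "i + n - 1"] i n n1 lg
        unfolding e_def by auto
    qed
    have eps: "\<forall>i\<in>{1..L}. spec_norm (A i - A0 i) \<le> \<epsilon>" using h3 unfolding \<epsilon>_def by simp
    have enn: "0 \<le> e" "0 \<le> \<epsilon>" unfolding e_def \<epsilon>_def by auto
    note MB = main_bounds[OF _ dpos cA0 cA eps enn(2) Mge enn(1) hM he small]
    have seg: "mat_seg A i (j - i) = segp d A i (j - i + 1)" if "1 \<le> i" "i \<le> j" "j \<le> L" for i j
      using mat_seg_segp[OF cA, of i "j - i"] that by simp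
    have R1: "\<forall>i j. 1 \<le> i \<longrightarrow> i \<le> j \<longrightarrow> j \<le> L \<longrightarrow> spec_norm (mat_seg A i (j - i)) \<le> max (2 * K) 4 * real L ^ 3"
    proof (intro allI impI)
      fix i j assume ij: "1 \<le> i" "i \<le> j" "j \<le> L"
      have "spec_norm (mat_seg A i (j - i)) \<le> 2 * M" using MB(1)[rule_format, of i "j - i + 1"] seg[OF ij] ij Lr by auto
      also have "\<dots> = (2 * K) * real L ^ 3" unfolding M_def by simp
      also have "\<dots> \<le> max (2 * K) 4 * real L ^ 3" by (intro mult_right_mono) auto
      finally show "spec_norm (mat_seg A i (j - i)) \<le> max (2 * K) 4 * real L ^ 3" by simp
    qed
    have R2: "\<forall>i j. 1 \<le> i \<longrightarrow> i \<le> j \<longrightarrow> j \<le> L \<longrightarrow> real (j - i) \<ge> real L / 4 \<longrightarrow>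
          spec_norm (mat_seg A i (j - i)) \<le> max (2 * K) 4 * exp (- c\<^sub>1 * real L powr \<gamma>)"
    proof (intro allI impI)
      fix i j assume ij: "1 \<le> i" "i \<le> j" "j \<le> L" and lg: "real (j - i) \<ge> real L / 4"
      have "real (j - i + 1) - 1 = real (j - i)" by simp
      then have "spec_norm (mat_seg A i (j - i)) \<le> 3 * e + 2 * real L ^ 2 * M ^ 3 * \<epsilon> ^ 2"
        using MB(2)[rule_format, of i "j - i + 1"] seg[OF ij] ij Lr L40 lg by auto
      also have "\<dots> \<le> 4 * e" using tail by simp
      also have "\<dots> \<le> max (2 * K) 4 * e" using enn by (intro mult_right_mono) auto
      finally show "spec_norm (mat_seg A i (j - i)) \<le> max (2 * K) 4 * exp (- c\<^sub>1 * real L powr \<gamma>)"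
        unfolding e_def by simp
    qed
    from R1 R2 show "(\<forall>i j. 1 \<le> i \<longrightarrow> i \<le> j \<longrightarrow> j \<le> L \<longrightarrow> spec_norm (mat_seg A i (j - i)) \<le> max (2 * K) 4 * real L ^ 3) \<and>
      (\<forall>i j. 1 \<le> i \<longrightarrow> i \<le> j \<longrightarrow> j \<le> L \<longrightarrow> real (j - i) \<ge> real L / 4 \<longrightarrow>
          spec_norm (mat_seg A i (j - i)) \<le> max (2 * K) 4 * exp (- c\<^sub>1 * real L powr \<gamma>))" by (rule conjI)
  qed
qed


end
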